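(* Let $\pi$ be the free group of rank two with presentation $\langle A_1,A_2,A_3\mid A_1A_2A_3=\mathbb{I}\rangle$, and let $\rho_0:\pi\to\mathsf{SO}(2,1)^0$ be a homomorphism such that each $\rho_0(A_i)$ ($i=1,2,3$) is hyperbolic or parabolic and $\rho_0(\pi)$ is not solvable. For each $i$ choose $\mathsf{v}_i\in\mathrm{Fix}(\rho_0(A_i))$ positive relative to $\rho_0(A_i)$, and define $\mu_i:H^1(\pi,V)\to\mathbb{R}$ by $\mu_i([u])=u(A_i)\cdot\mathsf{v}_i$ (the value of $(\rho(A_i)(x)-x)\cdot\mathsf{v}_i$ for the affine deformation $\rho$ with translational part $u$). Then $\mu=(\mu_1,\mu_2,\mu_3):H^1(\pi,V)\to\mathbb{R}^3$ is a well-defined linear isomorphism of vector spaces.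
   Context: $V=\mathbb{R}^3$ with the Lorentzian inner product $x\cdot y=x_1y_1+x_2y_2-x_3y_3$ and its standard orientation, regarded as a $\pi$-module via $\rho_0$; $\mathsf{SO}(2,1)^0$ is the identity component of its isometry group. $H^1(\pi,V)$ is group cohomology: cocycles $u:\pi\to V$ with $u(gh)=u(g)+\rho_0(g)u(h)$ modulo coboundaries $g\mapsto \rho_0(g)x-x$. A nonidentity $g\in\mathsf{SO}(2,1)^0$ is hyperbolic if it has three distinct real eigenvalues and parabolic if its only eigenvalue is $1$; then $\mathrm{Fix}(g)$ is a line. A vector $\mathsf{v}\in\mathrm{Fix}(g)$ is positive relative to $g$ if $(\mathsf{v},x,gx)$ is a positively oriented basis for any null ($x\cdot x=0$) or timelike ($x\cdot x<0$) vector $x$ that is not an eigenvector of $g$. An affine deformation with translational part $u$ is $\rho(g)(x)=\rho_0(g)x+u(g)$. *)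

theory Defs
  imports "HOL-Analysis.Analysis" "HOL-Algebra.Solvable_Groups" "HOL-Algebra.Generated_Groups"
begin

definition lor :: "real^3 \<Rightarrow> real^3 \<Rightarrow> real" where
  "lor x y = x$1 * y$1 + x$2 * y$2 - x$3 * y$3"

definition O21 :: "(real^3^3) set" where
  "O21 = {g. \<forall>x y. lor (g *v x) (g *v y) = lor x y}"

definition SO21_0 :: "(real^3^3) set" where
  "SO21_0 = connected_component_set O21 (mat 1)"

definition SO21grp :: "(real^3^3) monoid" where
  "SO21grp = \<lparr>carrier = SO21_0, mult = (**), one = mat 1\<rparr>"

definition real_eigenvalue :: "real^3^3 \<Rightarrow> real \<Rightarrow> bool" where
  "real_eigenvalue g l \<longleftrightarrow> (\<exists>v. v \<noteq> 0 \<and> g *v v = l *\<^sub>R v)"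

definition cmat :: "real^3^3 \<Rightarrow> complex^3^3" where
  "cmat g = (\<chi> i j. complex_of_real (g$i$j))"

definition complex_eigenvalue :: "real^3^3 \<Rightarrow> complex \<Rightarrow> bool" where
  "complex_eigenvalue g l \<longleftrightarrow> (\<exists>v::complex^3. v \<noteq> 0 \<and> cmat g *v v = l *s v)"

definition hyperbolic :: "real^3^3 \<Rightarrow> bool" where
  "hyperbolic g \<longleftrightarrow> g \<noteq> mat 1 \<and>
     (\<exists>l1 l2 l3. l1 \<noteq> l2 \<and> l1 \<noteq> l3 \<and> l2 \<noteq> l3 \<and>
        real_eigenvalue g l1 \<and> real_eigenvalue g l2 \<and> real_eigenvalue g l3)"

definition parabolic :: "real^3^3 \<Rightarrow> bool" where
  "parabolic g \<longleftrightarrow> g \<noteq> mat 1 \<and> (\<forall>l. complex_eigenvalue g l \<longleftrightarrow> l = 1)"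

definition Fix :: "real^3^3 \<Rightarrow> (real^3) set" where
  "Fix g = {x. g *v x = x}"

definition eigenvector :: "real^3^3 \<Rightarrow> real^3 \<Rightarrow> bool" where
  "eigenvector g x \<longleftrightarrow> x \<noteq> 0 \<and> (\<exists>l. g *v x = l *\<^sub>R x)"

definition pos_oriented :: "real^3 \<Rightarrow> real^3 \<Rightarrow> real^3 \<Rightarrow> bool" where
  "pos_oriented a b c \<longleftrightarrow> det (vector [a, b, c] :: real^3^3) > 0"

definition positive_rel :: "real^3^3 \<Rightarrow> real^3 \<Rightarrow> bool" where
  "positive_rel g v \<longleftrightarrow> v \<in> Fix g \<and>
     (\<forall>x. x \<noteq> 0 \<and> lor x x \<le> 0 \<and> \<not> eigenvector g x \<longrightarrow> pos_oriented v x (g *v x))"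

text \<open>Words in two letters: (letter, inverted?).\<close>
fun eval_word :: "('g, 'b) monoid_scheme \<Rightarrow> 'g \<Rightarrow> 'g \<Rightarrow> (bool \<times> bool) list \<Rightarrow> 'g" where
  "eval_word G a b [] = \<one>\<^bsub>G\<^esub>"
| "eval_word G a b ((l, i) # w) =
     (let x = (if l then b else a) in if i then inv\<^bsub>G\<^esub> x else x) \<otimes>\<^bsub>G\<^esub> eval_word G a b w"

fun reduced_word :: "(bool \<times> bool) list \<Rightarrow> bool" where
  "reduced_word [] = True"
| "reduced_word [_] = True"
| "reduced_word ((l1, i1) # (l2, i2) # w) =
     (\<not> (l1 = l2 \<and> i1 \<noteq> i2) \<and> reduced_word ((l2, i2) # w))"

definition free_on2 :: "('g, 'b) monoid_scheme \<Rightarrow> 'g \<Rightarrow> 'g \<Rightarrow> bool" where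
  "free_on2 G a b \<longleftrightarrow> group G \<and> a \<in> carrier G \<and> b \<in> carrier G \<and>
     generate G {a, b} = carrier G \<and>
     (\<forall>w. w \<noteq> [] \<and> reduced_word w \<longrightarrow> eval_word G a b w \<noteq> \<one>\<^bsub>G\<^esub>)"

definition cocycles :: "('g, 'b) monoid_scheme \<Rightarrow> ('g \<Rightarrow> real^3^3) \<Rightarrow> ('g \<Rightarrow> real^3) set" where
  "cocycles G r = {u. \<forall>g\<in>carrier G. \<forall>h\<in>carrier G. u (g \<otimes>\<^bsub>G\<^esub> h) = u g + r g *v u h}"

definition coboundaries :: "('g, 'b) monoid_scheme \<Rightarrow> ('g \<Rightarrow> real^3^3) \<Rightarrow> ('g \<Rightarrow> real^3) set" where
  "coboundaries G r = {u. \<exists>x. \<forall>g\<in>carrier G. u g = r g *v x - x}"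

end

theory Submission
  imports Defs
begin


lemma lor_add_left: "lor (x + y) z = lor x z + lor y z"
  and lor_add_right: "lor x (y + z) = lor x y + lor x z"
  and lor_diff_left: "lor (x - y) z = lor x z - lor y z"
  and lor_diff_right: "lor x (y - z) = lor x y - lor x z"
  and lor_scale_left: "lor (c *\<^sub>R x) y = c * lor x y"
  and lor_scale_right: "lor x (c *\<^sub>R y) = c * lor x y"
  and lor_minus_left: "lor (- x) y = - lor x y"
  and lor_zero_left: "lor 0 y = 0"
  and lor_sym: "lor x y = lor y x"
  by (simp_all add: lor_def algebra_simps)

definition Jm :: "real^3^3" where
  "Jm = (\<chi> i j. if i = j then (if i = 3 then -1 else 1) else 0)"

lemma lor_Jm: "lor x y = x \<bullet> (Jm *v y)"
  by (simp add: lor_def Jm_def inner_vec_def sum_3 matrix_vector_mult_def)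

lemma det_Jm: "det Jm = -1"
  by (simp add: det_3 Jm_def)

lemma lor_nondeg: assumes "\<And>z. lor d z = 0" shows "d = 0"
proof -
  have "lor d (Jm *v d) = 0" by (rule assms)
  hence "d$1 * d$1 + d$2 * d$2 + d$3 * d$3 = 0"
    by (simp add: lor_def Jm_def matrix_vector_mult_def sum_3)
  moreover have "d$1 * d$1 \<ge> 0" "d$2 * d$2 \<ge> 0" "d$3 * d$3 \<ge> 0" by simp_all
  ultimately have "d$1 * d$1 = 0 \<and> d$2 * d$2 = 0 \<and> d$3 * d$3 = 0" by linarith
  hence "d$1 = 0 \<and> d$2 = 0 \<and> d$3 = 0" by simp
  thus ?thesis by (simp add: vec_eq_iff forall_3)
qed

lemma O21_inj: assumes "g \<in> O21" "g *v x = 0" shows "x = 0"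
proof (rule lor_nondeg)
  fix z
  have "lor x z = lor (g *v x) (g *v z)" using assms(1) by (simp add: O21_def)
  thus "lor x z = 0" using assms(2) by (simp add: lor_def)
qed

lemma O21_mult: "g \<in> O21 \<Longrightarrow> h \<in> O21 \<Longrightarrow> g ** h \<in> O21"
  by (simp add: O21_def matrix_vector_mul_assoc[symmetric])

lemma mat1_O21: "mat 1 \<in> O21" by (simp add: O21_def)

lemma O21_fix_orth: assumes "g \<in> O21" "g *v v = v" shows "lor (g *v x - x) v = 0"
proof -
  have "lor (g *v x) v = lor (g *v x) (g *v v)" using assms(2) by simp
  also have "\<dots> = lor x v" using assms(1) by (simp add: O21_def)
  finally show ?thesis by (simp add: lor_diff_left)
qed

lemma idem_O21: assumes "g \<in> O21" "g ** g = g" shows "g = mat 1"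
proof -
  have "g *v x = x" for x
  proof -
    have "g *v (g *v x - x) = 0"
      using assms(2) by (simp add: matrix_vector_mult_diff_distrib matrix_vector_mul_assoc)
    from O21_inj[OF assms(1) this] show ?thesis by simp
  qed
  thus ?thesis by (simp add: matrix_eq)
qed

lemma O21_matrix: assumes "g \<in> O21" shows "transpose g ** Jm ** g = Jm"
proof -
  have "(transpose g ** Jm ** g) *v y = Jm *v y" for y
  proof -
    have "x \<bullet> ((transpose g ** Jm ** g) *v y - Jm *v y) = 0" for x
    proof -
      have "x \<bullet> ((transpose g ** Jm ** g) *v y) = x \<bullet> (transpose g *v (Jm *v (g *v y)))"
        by (simp add: matrix_vector_mul_assoc matrix_mul_assoc)
      also have "\<dots> = (g *v x) \<bullet> (Jm *v (g *v y))"
        by (metis dot_lmul_matrix vector_transpose_matrix transpose_matrix_vector)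
      also have "\<dots> = lor (g *v x) (g *v y)" by (simp add: lor_Jm)
      also have "\<dots> = lor x y" using assms by (simp add: O21_def)
      finally show ?thesis by (simp add: lor_Jm inner_diff_right)
    qed
    from this[of "(transpose g ** Jm ** g) *v y - Jm *v y"] show ?thesis by simp
  qed
  thus ?thesis by (simp add: matrix_eq)
qed

lemma O21_det: assumes "g \<in> O21" shows "det g * det g = 1"
proof -
  have "det (transpose g ** Jm ** g) = det Jm" using O21_matrix[OF assms] by simp
  thus ?thesis by (simp add: det_mul det_transpose det_Jm)
qed

lemma continuous_det3: "continuous_on S (det :: real^3^3 \<Rightarrow> real)"
proof -
  have "det = (\<lambda>A::real^3^3. A $ 1 $ 1 * A $ 2 $ 2 * A $ 3 $ 3 +
  A $ 1 $ 2 * A $ 2 $ 3 * A $ 3 $ 1 +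
  A $ 1 $ 3 * A $ 2 $ 1 * A $ 3 $ 2 -
  A $ 1 $ 1 * A $ 2 $ 3 * A $ 3 $ 2 -
  A $ 1 $ 2 * A $ 2 $ 1 * A $ 3 $ 3 -
  A $ 1 $ 3 * A $ 2 $ 2 * A $ 3 $ 1)" (is "_ = ?f") by (rule ext) (rule det_3)
  moreover have "continuous_on S ?f" by (intro continuous_intros)
  ultimately show ?thesis by metis
qed

lemma SO21_O21: "g \<in> SO21_0 \<Longrightarrow> g \<in> O21"
  using connected_component_subset by (auto simp: SO21_0_def)

lemma SO21_det: assumes "g \<in> SO21_0" shows "det g = 1"
proof (rule ccontr)
  assume ne: "det g \<noteq> 1"
  have gO: "g \<in> O21" using SO21_O21[OF assms] .
  hence "det g = -1" using O21_det ne by (smt (verit) mult_cancel_left1 square_eq_1_iff)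
  let ?S = "connected_component_set O21 (mat 1)"
  have "connected (det ` ?S)"
    by (rule connected_continuous_image[OF continuous_det3 connected_connected_component])
  moreover have "-1 \<in> det ` ?S" using assms \<open>det g = -1\<close> by (force simp: SO21_0_def)
  moreover have "1 \<in> det ` ?S" using mat1_O21
    by (metis connected_component_refl_eq det_I image_eqI mem_Collect_eq)
  ultimately have "{-1..1} \<subseteq> det ` ?S" by (rule connected_contains_Icc)
  hence "0 \<in> det ` ?S" by auto
  then obtain h where "h \<in> ?S" "det h = 0" by auto
  hence "h \<in> O21" using connected_component_subset by auto
  with O21_det \<open>det h = 0\<close> show False by fastforce
qed



definition lc :: "real^3 \<Rightarrow> real^3 \<Rightarrow> real^3" where
  "lc a b = Jm *v (cross3 a b)"

lemma lor_lc: "lor (lc a b) z = (cross3 a b) \<bullet> z"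
  by (simp add: lc_def lor_def Jm_def matrix_vector_mult_def sum_3 inner_vec_def)

lemma lc_add: "lc w (x + y) = lc w x + lc w y"
  and lc_scale: "lc w (s *\<^sub>R x) = s *\<^sub>R lc w x"
  by (simp_all add: lc_def cross_add_right cross_mult_right
      matrix_vector_right_distrib matrix_vector_mult_scaleR)

lemma matrix_surj: fixes g :: "real^3^3" assumes "det g \<noteq> 0" shows "\<exists>z. g *v z = y"
proof -
  have "invertible g" using invertible_det_nz assms by auto
  then obtain h where "g ** h = mat 1" by (auto simp: invertible_def)
  hence "g *v (h *v y) = y" by (simp add: matrix_vector_mul_assoc)
  thus ?thesis by blast
qed

lemma lc_equiv: assumes "g \<in> O21" "det g = 1" shows "g *v lc a b = lc (g *v a) (g *v b)"
proof -
  have "lor (lc (g *v a) (g *v b) - g *v lc a b) z' = 0" for z'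
  proof -
    obtain z where z: "g *v z = z'" using matrix_surj[of g z'] assms(2) by auto
    have "lor (lc (g *v a) (g *v b)) (g *v z) = (cross3 (g *v a) (g *v b)) \<bullet> (g *v z)"
      by (simp add: lor_lc)
    also have "\<dots> = (transpose g *v (cross3 (g *v a) (g *v b))) \<bullet> z"
      by (metis dot_lmul_matrix transpose_matrix_vector inner_commute)
    also have "\<dots> = (cross3 a b) \<bullet> z" using cross_matrix_mult[of g a b] assms(2) by (metis scaleR_one)
    also have "\<dots> = lor (lc a b) z" by (simp add: lor_lc)
    also have "\<dots> = lor (g *v lc a b) (g *v z)" using assms(1) by (simp add: O21_def)
    finally show ?thesis using z by (simp add: lor_diff_left)
  qed
  hence "lc (g *v a) (g *v b) - g *v lc a b = 0" by (rule lor_nondeg)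
  thus ?thesis by simp
qed

lemma basis3: assumes "det (vector [p, q, r] :: real^3^3) \<noteq> 0"
  shows "\<exists>a b c. v = a *\<^sub>R p + b *\<^sub>R q + c *\<^sub>R r"
proof -
  let ?M = "transpose (vector [p, q, r] :: real^3^3)"
  have "det ?M \<noteq> 0" using assms by (simp add: det_transpose)
  then obtain y where y: "?M *v y = v" using matrix_surj by blast
  have "?M *v y = y$1 *\<^sub>R p + y$2 *\<^sub>R q + y$3 *\<^sub>R r"
    by (simp add: vec_eq_iff matrix_vector_mult_def sum_3 transpose_def algebra_simps)
  thus ?thesis using y by metis
qed

lemma lin_eq_on_basis:
  fixes f k :: "real^3 \<Rightarrow> real^3"
  assumes "det (vector [p, q, r] :: real^3^3) \<noteq> 0"
    and "\<And>x y. f (x + y) = f x + f y" "\<And>s x. f (s *\<^sub>R x) = s *\<^sub>R f x"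
    and "\<And>x y. k (x + y) = k x + k y" "\<And>s x. k (s *\<^sub>R x) = s *\<^sub>R k x"
    and "f p = k p" "f q = k q" "f r = k r"
  shows "f v = k v"
proof -
  obtain a b c where "v = a *\<^sub>R p + b *\<^sub>R q + c *\<^sub>R r" using basis3[OF assms(1)] by blast
  thus ?thesis using assms(2-) by simp
qed

lemma lc_expl: "lc w v = vector [w$2 * v$3 - w$3 * v$2, w$3 * v$1 - w$1 * v$3, -(w$1 * v$2 - w$2 * v$1)]"
  by (simp add: lc_def Jm_def matrix_vector_mult_def sum_3 cross3_def vec_eq_iff forall_3)

lemma cyc1: "det (vector [vector [1,0,1], lc w (vector [1,0,1]), lc w (lc w (vector [1,0,1]))] :: real^3^3) = - (lor w (vector [1,0,1]) * lor w (vector [1,0,1]) * lor w (vector [1,0,1]))"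
  by (simp add: lc_expl det_3 lor_def; algebra)
lemma cyc2: "det (vector [vector [-1,0,1], lc w (vector [-1,0,1]), lc w (lc w (vector [-1,0,1]))] :: real^3^3) = - (lor w (vector [-1,0,1]) * lor w (vector [-1,0,1]) * lor w (vector [-1,0,1]))"
  by (simp add: lc_expl det_3 lor_def; algebra)
lemma cyc3: "det (vector [vector [0,1,1], lc w (vector [0,1,1]), lc w (lc w (vector [0,1,1]))] :: real^3^3) = - (lor w (vector [0,1,1]) * lor w (vector [0,1,1]) * lor w (vector [0,1,1]))"
  by (simp add: lc_expl det_3 lor_def; algebra)

lemma cyclic_det:
  fixes w x :: "real^3"
  assumes "x \<in> {vector [1,0,1], vector [-1,0,1], vector [0,1,1]}"
  shows "det (vector [x, lc w x, lc w (lc w x)] :: real^3^3) = - (lor w x * lor w x * lor w x)"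
  using assms cyc1 cyc2 cyc3 by blast

lemma cyclic_exists:
  fixes w :: "real^3" assumes "w \<noteq> 0"
  shows "\<exists>x. det (vector [x, lc w x, lc w (lc w x)] :: real^3^3) \<noteq> 0"
proof -
  have "\<exists>x \<in> {vector [1,0,1], vector [-1,0,1], vector [0,1,1]}. lor w x \<noteq> 0"
  proof (rule ccontr)
    assume "\<not> ?thesis"
    hence "w$1 - w$3 = 0" "-w$1 - w$3 = 0" "w$2 - w$3 = 0" by (auto simp: lor_def)
    hence "w$1 = 0" "w$2 = 0" "w$3 = 0" by linarith+
    thus False using assms by (simp add: vec_eq_iff forall_3)
  qed
  then obtain x where x: "x \<in> {vector [1,0,1], vector [-1,0,1], vector [0,1,1]}" "lor w x \<noteq> 0" by blast
  have "det (vector [x, lc w x, lc w (lc w x)] :: real^3^3) = - (lor w x * lor w x * lor w x)"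
    by (rule cyclic_det[OF x(1)])
  thus ?thesis using x(2) by (intro exI[of _ x]) simp
qed

lemma stab_commute:
  fixes w :: "real^3"
  assumes "w \<noteq> 0" "g \<in> O21" "det g = 1" "g *v w = w" "h \<in> O21" "det h = 1" "h *v w = w"
  shows "g ** h = h ** g"
proof -
  let ?c = "lc w"
  obtain x where x: "det (vector [x, ?c x, ?c (?c x)] :: real^3^3) \<noteq> 0"
    using cyclic_exists[OF assms(1)] by blast
  have poly: "\<exists>\<alpha> \<beta> \<gamma>. \<forall>v. k *v v = \<alpha> *\<^sub>R v + \<beta> *\<^sub>R ?c v + \<gamma> *\<^sub>R ?c (?c v)"
    if k: "k \<in> O21" "det k = 1" "k *v w = w" for k
  proof -
    have comm: "k *v ?c v = ?c (k *v v)" for v using lc_equiv[OF k(1,2)] k(3) by simp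
    obtain \<alpha> \<beta> \<gamma> where abc: "k *v x = \<alpha> *\<^sub>R x + \<beta> *\<^sub>R ?c x + \<gamma> *\<^sub>R ?c (?c x)"
      using basis3[OF x] by blast
    let ?P = "\<lambda>v. \<alpha> *\<^sub>R v + \<beta> *\<^sub>R ?c v + \<gamma> *\<^sub>R ?c (?c v)"
    have Pc: "?c (?P v) = ?P (?c v)" for v by (simp add: lc_add lc_scale)
    have "k *v v = ?P v" for v
    proof (rule lin_eq_on_basis[OF x, where f="\<lambda>v. k *v v" and k="?P"])
      show "k *v (a + b) = k *v a + k *v b" for a b by (simp add: matrix_vector_right_distrib)
      show "k *v (s *\<^sub>R a) = s *\<^sub>R (k *v a)" for s a by (simp add: matrix_vector_mult_scaleR)
      show "?P (a + b) = ?P a + ?P b" for a b by (simp add: lc_add lc_scale algebra_simps)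
      show "?P (s *\<^sub>R a) = s *\<^sub>R ?P a" for s a by (simp add: lc_add lc_scale algebra_simps)
      show "k *v x = ?P x" by (rule abc)
      show "k *v ?c x = ?P (?c x)" using comm abc Pc by metis
      show "k *v ?c (?c x) = ?P (?c (?c x))" using comm abc Pc by metis
    qed
    thus ?thesis by blast
  qed
  obtain a1 b1 c1 where G: "\<forall>v. g *v v = a1 *\<^sub>R v + b1 *\<^sub>R ?c v + c1 *\<^sub>R ?c (?c v)"
    using poly[OF assms(2-4)] by blast
  obtain a2 b2 c2 where H: "\<forall>v. h *v v = a2 *\<^sub>R v + b2 *\<^sub>R ?c v + c2 *\<^sub>R ?c (?c v)"
    using poly[OF assms(5-7)] by blast
  have "g *v (h *v v) = h *v (g *v v)" for v
    using G H by (simp add: lc_add lc_scale algebra_simps)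
  thus ?thesis by (simp add: matrix_eq matrix_vector_mul_assoc)
qed



definition lt :: "('g, 'b) monoid_scheme \<Rightarrow> 'g \<Rightarrow> 'g \<Rightarrow> bool \<times> bool \<Rightarrow> 'g" where
  "lt G a b x = (let y = (if fst x then b else a) in if snd x then inv\<^bsub>G\<^esub> y else y)"

lemma eval_cons: "eval_word G a b (x # w) = lt G a b x \<otimes>\<^bsub>G\<^esub> eval_word G a b w"
  by (cases x) (simp add: lt_def)

declare eval_word.simps(2)[simp del]

fun push :: "bool \<times> bool \<Rightarrow> (bool \<times> bool) list \<Rightarrow> (bool \<times> bool) list" where
  "push x [] = [x]"
| "push x (y # ys) = (if fst x = fst y \<and> snd x \<noteq> snd y then ys else x # y # ys)"

fun red :: "(bool \<times> bool) list \<Rightarrow> (bool \<times> bool) list" where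
  "red [] = []"
| "red (x # w) = push x (red w)"

definition winv :: "(bool \<times> bool) list \<Rightarrow> (bool \<times> bool) list" where
  "winv w = rev (map (\<lambda>x. (fst x, \<not> snd x)) w)"

lemma reduced_tail: "reduced_word (y # ys) \<Longrightarrow> reduced_word ys"
  by (cases ys) (auto, cases y, auto)

lemma reduced_push: "reduced_word w \<Longrightarrow> reduced_word (push x w)"
proof (cases w)
  case Nil thus ?thesis by simp
next
  case (Cons y ys)
  assume r: "reduced_word w"
  show ?thesis
  proof (cases "fst x = fst y \<and> snd x \<noteq> snd y")
    case True thus ?thesis using r Cons reduced_tail by auto
  next
    case False thus ?thesis using r Cons by (cases x, cases y) auto
  qed
qed

lemma reduced_red: "reduced_word (red w)"
  by (induction w) (auto intro: reduced_push)

context group begin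

lemma lt_carrier: "a \<in> carrier G \<Longrightarrow> b \<in> carrier G \<Longrightarrow> lt G a b x \<in> carrier G"
  by (auto simp: lt_def Let_def)

lemma eval_carrier: "a \<in> carrier G \<Longrightarrow> b \<in> carrier G \<Longrightarrow> eval_word G a b w \<in> carrier G"
  by (induction w) (auto simp: eval_cons lt_carrier)

lemma lt_cancel: assumes "a \<in> carrier G" "b \<in> carrier G" "fst x = fst y" "snd x \<noteq> snd y"
  shows "lt G a b x \<otimes> lt G a b y = \<one>"
  using assms by (cases x; cases y) (auto simp: lt_def)

lemma eval_push: assumes "a \<in> carrier G" "b \<in> carrier G"
  shows "eval_word G a b (push x w) = eval_word G a b (x # w)"
proof (cases w)
  case Nil thus ?thesis by (simp add: eval_cons)
next
  case (Cons y ys)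
  show ?thesis
  proof (cases "fst x = fst y \<and> snd x \<noteq> snd y")
    case True
    have "eval_word G a b (x # w) = (lt G a b x \<otimes> lt G a b y) \<otimes> eval_word G a b ys"
      using Cons assms by (simp add: eval_cons m_assoc lt_carrier eval_carrier)
    also have "\<dots> = eval_word G a b ys" using lt_cancel[OF assms] True assms
      by (simp add: eval_carrier)
    finally show ?thesis using True Cons by simp
  next
    case False thus ?thesis using Cons by auto
  qed
qed

lemma eval_red: assumes "a \<in> carrier G" "b \<in> carrier G"
  shows "eval_word G a b (red w) = eval_word G a b w"
  by (induction w) (simp_all add: eval_push[OF assms] eval_cons)

lemma eval_append: assumes "a \<in> carrier G" "b \<in> carrier G"
  shows "eval_word G a b (w @ w') = eval_word G a b w \<otimes> eval_word G a b w'"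
  by (induction w) (simp_all add: eval_cons m_assoc assms lt_carrier eval_carrier)

lemma lt_flip: assumes "a \<in> carrier G" "b \<in> carrier G"
  shows "lt G a b (fst x, \<not> snd x) = inv (lt G a b x)"
  using assms by (cases x) (auto simp: lt_def)

lemma eval_winv: assumes "a \<in> carrier G" "b \<in> carrier G"
  shows "eval_word G a b (winv w) = inv (eval_word G a b w)"
proof (induction w)
  case Nil thus ?case by (simp add: winv_def)
next
  case (Cons x w)
  have "winv (x # w) = winv w @ [(fst x, \<not> snd x)]" by (simp add: winv_def)
  hence "eval_word G a b (winv (x # w)) = inv (eval_word G a b w) \<otimes> inv (lt G a b x)"
    using Cons assms by (simp add: eval_append eval_cons lt_flip lt_carrier eval_carrier)
  also have "\<dots> = inv (lt G a b x \<otimes> eval_word G a b w)"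
    using assms by (simp add: inv_mult_group lt_carrier eval_carrier)
  finally show ?case by (simp add: eval_cons)
qed

lemma generate_word: assumes "a \<in> carrier G" "b \<in> carrier G" "g \<in> generate G {a, b}"
  shows "\<exists>w. g = eval_word G a b w"
  using assms(3)
proof (induction rule: generate.induct)
  case one thus ?case by (intro exI[of _ "[]"]) simp
next
  case (incl h)
  hence "h = eval_word G a b [(False, False)] \<or> h = eval_word G a b [(True, False)]"
    using assms by (auto simp: eval_cons lt_def)
  thus ?case by blast
next
  case (inv h)
  hence "inv h = eval_word G a b [(False, True)] \<or> inv h = eval_word G a b [(True, True)]"
    using assms by (auto simp: eval_cons lt_def)
  thus ?case by blast
next
  case (eng h1 h2)
  then obtain w1 w2 where "h1 = eval_word G a b w1" "h2 = eval_word G a b w2" by blast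
  thus ?case using eval_append[OF assms(1,2)] by metis
qed

end

lemma free_word:
  assumes "free_on2 G a b" "g \<in> carrier G" shows "\<exists>w. g = eval_word G a b w"
  using assms group.generate_word[of G a b g] by (auto simp: free_on2_def)

lemma free_red:
  assumes "free_on2 G a b" "eval_word G a b w = \<one>\<^bsub>G\<^esub>" shows "red w = []"
proof -
  have grp: "group G" "a \<in> carrier G" "b \<in> carrier G" using assms(1) by (auto simp: free_on2_def)
  have "eval_word G a b (red w) = \<one>\<^bsub>G\<^esub>" using group.eval_red[OF grp] assms(2) by simp
  thus ?thesis using assms(1) reduced_red[of w] by (auto simp: free_on2_def)
qed



locale fr =
  fixes G :: "('g, 'b) monoid_scheme" and a b :: 'g and rho :: "'g \<Rightarrow> real^3^3"
  assumes free: "free_on2 G a b" and hom: "rho \<in> hom G SO21grp"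
begin

lemma grp: "group G" and a_car: "a \<in> carrier G" and b_car: "b \<in> carrier G"
  using free unfolding free_on2_def by blast+

lemma one_car: "\<one>\<^bsub>G\<^esub> \<in> carrier G" by (rule monoid.one_closed[OF group.is_monoid[OF grp]])
lemma r_one': "x \<in> carrier G \<Longrightarrow> x \<otimes>\<^bsub>G\<^esub> \<one>\<^bsub>G\<^esub> = x" by (rule monoid.r_one[OF group.is_monoid[OF grp]])
lemma l_one': "x \<in> carrier G \<Longrightarrow> \<one>\<^bsub>G\<^esub> \<otimes>\<^bsub>G\<^esub> x = x" by (rule monoid.l_one[OF group.is_monoid[OF grp]])

lemma rho_mult: "x \<in> carrier G \<Longrightarrow> y \<in> carrier G \<Longrightarrow> rho (x \<otimes>\<^bsub>G\<^esub> y) = rho x ** rho y"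
  using hom by (simp add: hom_def SO21grp_def)

lemma rho_SO: "x \<in> carrier G \<Longrightarrow> rho x \<in> SO21_0"
  using hom by (auto simp: hom_def SO21grp_def)

lemma rho_O: "x \<in> carrier G \<Longrightarrow> rho x \<in> O21"
  using rho_SO SO21_O21 by blast

lemma rho_one: "rho \<one>\<^bsub>G\<^esub> = mat 1"
proof (rule idem_O21)
  show "rho \<one>\<^bsub>G\<^esub> \<in> O21" using rho_O one_car by blast
  show "rho \<one>\<^bsub>G\<^esub> ** rho \<one>\<^bsub>G\<^esub> = rho \<one>\<^bsub>G\<^esub>"
    using rho_mult[of "\<one>\<^bsub>G\<^esub>" "\<one>\<^bsub>G\<^esub>"] one_car l_one'[OF one_car] by simp
qed

lemma rho_inv: assumes "x \<in> carrier G"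
  shows "rho (inv\<^bsub>G\<^esub> x) ** rho x = mat 1" "rho x ** rho (inv\<^bsub>G\<^esub> x) = mat 1"
proof -
  have i: "inv\<^bsub>G\<^esub> x \<in> carrier G" using group.inv_closed[OF grp assms] .
  have "rho (inv\<^bsub>G\<^esub> x) ** rho x = rho (inv\<^bsub>G\<^esub> x \<otimes>\<^bsub>G\<^esub> x)" using rho_mult[OF i assms] by simp
  also have "\<dots> = mat 1" using group.l_inv[OF grp assms] rho_one by simp
  finally show "rho (inv\<^bsub>G\<^esub> x) ** rho x = mat 1" .
  have "rho x ** rho (inv\<^bsub>G\<^esub> x) = rho (x \<otimes>\<^bsub>G\<^esub> inv\<^bsub>G\<^esub> x)" using rho_mult[OF assms i] by simp
  also have "\<dots> = mat 1" using group.r_inv[OF grp assms] rho_one by simp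
  finally show "rho x ** rho (inv\<^bsub>G\<^esub> x) = mat 1" .
qed

abbreviation "ev \<equiv> eval_word G a b"
abbreviation "lt' \<equiv> lt G a b"

lemma lt_car: "lt' x \<in> carrier G" using group.lt_carrier[OF grp a_car b_car] .
lemma ev_car: "ev w \<in> carrier G" using group.eval_carrier[OF grp a_car b_car] .

definition tv :: "real^3 \<Rightarrow> real^3 \<Rightarrow> bool \<times> bool \<Rightarrow> real^3" where
  "tv c1 c2 x = (let cc = (if fst x then c2 else c1) in if snd x then - (rho (lt' x) *v cc) else cc)"

fun tw :: "real^3 \<Rightarrow> real^3 \<Rightarrow> (bool \<times> bool) list \<Rightarrow> real^3" where
  "tw c1 c2 [] = 0"
| "tw c1 c2 (x # w) = tv c1 c2 x + rho (lt' x) *v tw c1 c2 w"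

lemma tw_append: "tw c1 c2 (w @ w') = tw c1 c2 w + rho (ev w) *v tw c1 c2 w'"
proof (induction w)
  case Nil thus ?case by (simp add: rho_one)
next
  case (Cons x w)
  thus ?case
    by (simp add: eval_cons rho_mult lt_car ev_car matrix_vector_right_distrib
        matrix_vector_mul_assoc algebra_simps)
qed

lemma tv_cancel: assumes "fst x = fst y" "snd x \<noteq> snd y"
  shows "tv c1 c2 x + rho (lt' x) *v tv c1 c2 y = 0"
proof (cases x, cases y)
  fix l i l' i' assume xy: "x = (l, i)" "y = (l', i')"
  hence ll: "l' = l" "i' = (\<not> i)" using assms by auto
  let ?e = "if l then b else a"
  have e: "?e \<in> carrier G" using a_car b_car by auto
  show ?thesis
  proof (cases i)
    case True
    thus ?thesis using xy ll rho_inv(1)[OF e]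
      by (simp add: tv_def lt_def matrix_vector_mul_assoc)
  next
    case False
    thus ?thesis using xy ll rho_inv(2)[OF e]
      by (simp add: tv_def lt_def matrix_vector_mul_assoc vec.neg)
  qed
qed

lemma tw_push: "tw c1 c2 (push x w) = tw c1 c2 (x # w)"
proof (cases w)
  case Nil thus ?thesis by simp
next
  case (Cons y ys)
  show ?thesis
  proof (cases "fst x = fst y \<and> snd x \<noteq> snd y")
    case True
    have "tw c1 c2 (x # w) = (tv c1 c2 x + rho (lt' x) *v tv c1 c2 y)
            + rho (lt' x \<otimes>\<^bsub>G\<^esub> lt' y) *v tw c1 c2 ys"
      using Cons by (simp add: rho_mult lt_car matrix_vector_right_distrib
          matrix_vector_mul_assoc algebra_simps)
    also have "\<dots> = tw c1 c2 ys"
      using tv_cancel[of x y] True group.lt_cancel[OF grp a_car b_car, of x y] rho_one by simp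
    finally show ?thesis using True Cons by simp
  next
    case False thus ?thesis using Cons by auto
  qed
qed

lemma tw_red: "tw c1 c2 (red w) = tw c1 c2 w"
  by (induction w) (simp_all add: tw_push)

lemma tw_one: "ev w = \<one>\<^bsub>G\<^esub> \<Longrightarrow> tw c1 c2 w = 0"
  using free_red[OF free] tw_red[of c1 c2 w] by force

lemma tw_well: assumes "ev w = ev w'" shows "tw c1 c2 w = tw c1 c2 w'"
proof -
  have i: "ev (v @ winv w') = ev v \<otimes>\<^bsub>G\<^esub> inv\<^bsub>G\<^esub> (ev w')" for v
    using group.eval_append[OF grp a_car b_car] group.eval_winv[OF grp a_car b_car] by simp
  have "ev (w @ winv w') = \<one>\<^bsub>G\<^esub>" "ev (w' @ winv w') = \<one>\<^bsub>G\<^esub>"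
    using i assms group.r_inv[OF grp] ev_car by auto
  hence "tw c1 c2 (w @ winv w') = 0" "tw c1 c2 (w' @ winv w') = 0" using tw_one by auto
  thus ?thesis using assms by (simp add: tw_append add_eq_0_iff2)
qed

definition cob :: "real^3 \<Rightarrow> real^3 \<Rightarrow> 'g \<Rightarrow> real^3" where
  "cob c1 c2 g = tw c1 c2 (SOME w. g = ev w)"

lemma cob_ev: "cob c1 c2 (ev w) = tw c1 c2 w"
proof -
  have "ev w = ev (SOME w'. ev w = ev w')" by (rule someI[of _ w]) simp
  thus ?thesis unfolding cob_def using tw_well by metis
qed

lemma cob_cocycle: "cob c1 c2 \<in> cocycles G rho"
  unfolding cocycles_def
proof (intro CollectI ballI)
  fix g h assume "g \<in> carrier G" "h \<in> carrier G"
  then obtain w w' where w: "g = ev w" "h = ev w'" using free_word[OF free] by metis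
  have "g \<otimes>\<^bsub>G\<^esub> h = ev (w @ w')" using w group.eval_append[OF grp a_car b_car] by simp
  thus "cob c1 c2 (g \<otimes>\<^bsub>G\<^esub> h) = cob c1 c2 g + rho g *v cob c1 c2 h"
    using w by (simp add: cob_ev tw_append)
qed

lemma cob_a: "cob c1 c2 a = c1"
proof -
  have "a = ev [(False, False)]" using a_car r_one' by (simp add: eval_cons lt_def)
  hence "cob c1 c2 a = tw c1 c2 [(False, False)]" using cob_ev by metis
  thus ?thesis by (simp add: tv_def)
qed

lemma cob_b: "cob c1 c2 b = c2"
proof -
  have "b = ev [(True, False)]" using b_car r_one' by (simp add: eval_cons lt_def)
  hence "cob c1 c2 b = tw c1 c2 [(True, False)]" using cob_ev by metis
  thus ?thesis by (simp add: tv_def)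
qed

lemma cocycle_one: assumes "u \<in> cocycles G rho" shows "u \<one>\<^bsub>G\<^esub> = 0"
proof -
  have "u (\<one>\<^bsub>G\<^esub> \<otimes>\<^bsub>G\<^esub> \<one>\<^bsub>G\<^esub>) = u \<one>\<^bsub>G\<^esub> + rho \<one>\<^bsub>G\<^esub> *v u \<one>\<^bsub>G\<^esub>"
    using assms one_car unfolding cocycles_def by blast
  hence "u \<one>\<^bsub>G\<^esub> = u \<one>\<^bsub>G\<^esub> + u \<one>\<^bsub>G\<^esub>" using l_one'[OF one_car] rho_one by simp
  thus ?thesis by simp
qed

lemma cocycle_zero: assumes "u \<in> cocycles G rho" "u a = 0" "u b = 0" "g \<in> carrier G"
  shows "u g = 0"
proof -
  obtain w where w: "g = ev w" using free_word[OF free assms(4)] by blast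
  have "u (ev w) = 0"
  proof (induction w)
    case Nil thus ?case using cocycle_one[OF assms(1)] by simp
  next
    case (Cons x w)
    let ?e = "if fst x then b else a"
    have e: "?e \<in> carrier G" "u ?e = 0" using a_car b_car assms(2,3) by auto
    have "u (lt' x) = 0"
    proof (cases "snd x")
      case True
      have "u \<one>\<^bsub>G\<^esub> = u (inv\<^bsub>G\<^esub> ?e \<otimes>\<^bsub>G\<^esub> ?e)" using group.l_inv[OF grp e(1)] by simp
      also have "\<dots> = u (inv\<^bsub>G\<^esub> ?e)" using assms(1) e group.inv_closed[OF grp e(1)]
        by (simp add: cocycles_def)
      finally show ?thesis using True cocycle_one[OF assms(1)] by (simp add: lt_def)
    next
      case False thus ?thesis using e by (simp add: lt_def)
    qed
    thus ?case using Cons assms(1) lt_car ev_car by (simp add: eval_cons cocycles_def)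
  qed
  thus ?thesis using w by simp
qed

end



lemma parallel:
  assumes "p \<noteq> 0" "\<And>a. lor a p = 0 \<Longrightarrow> lor a q = 0"
  shows "\<exists>k. q = k *\<^sub>R p"
proof -
  have "lor (vector [p$2, -p$1, 0]) q = 0" by (rule assms(2)) (simp add: lor_def)
  hence e1: "p$2 * q$1 - p$1 * q$2 = 0" by (simp add: lor_def)
  have "lor (vector [p$3, 0, p$1]) q = 0" by (rule assms(2)) (simp add: lor_def)
  hence e2: "p$3 * q$1 - p$1 * q$3 = 0" by (simp add: lor_def)
  have "lor (vector [0, p$3, p$2]) q = 0" by (rule assms(2)) (simp add: lor_def)
  hence e3: "p$3 * q$2 - p$2 * q$3 = 0" by (simp add: lor_def)
  have "p$1 \<noteq> 0 \<or> p$2 \<noteq> 0 \<or> p$3 \<noteq> 0" using assms(1) by (auto simp: vec_eq_iff forall_3)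
  moreover
  { assume h: "p$1 \<noteq> 0"
    have "q = (q$1 / p$1) *\<^sub>R p" using h e1 e2
      by (simp add: vec_eq_iff forall_3 field_simps; simp add: algebra_simps)
    hence ?thesis by blast }
  moreover
  { assume h: "p$2 \<noteq> 0"
    have "q = (q$2 / p$2) *\<^sub>R p" using h e1 e3
      by (simp add: vec_eq_iff forall_3 field_simps; simp add: algebra_simps)
    hence ?thesis by blast }
  moreover
  { assume h: "p$3 \<noteq> 0"
    have "q = (q$3 / p$3) *\<^sub>R p" using h e2 e3
      by (simp add: vec_eq_iff forall_3 field_simps; simp add: algebra_simps)
    hence ?thesis by blast }
  ultimately show ?thesis by blast
qed

lemma lor_one_exists: assumes "v \<noteq> 0" shows "\<exists>p. lor p v = 1"
proof -
  have "\<exists>z. lor v z \<noteq> 0" using lor_nondeg assms by blast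
  then obtain z where z: "lor z v \<noteq> 0" using lor_sym by metis
  have "lor ((1 / lor z v) *\<^sub>R z) v = 1" using z by (simp add: lor_scale_left)
  thus ?thesis by blast
qed

lemma lin_main:
  fixes g1 g2 :: "real^3^3" and v1 v2 v3 :: "real^3"
  assumes g1: "g1 \<in> O21" and g2: "g2 \<in> O21"
    and nz: "v1 \<noteq> 0" "v2 \<noteq> 0" "v3 \<noteq> 0"
    and fx: "g1 *v v1 = v1" "g2 *v v2 = v2" "(g1 ** g2) *v v3 = v3"
    and nofix: "\<And>w. g1 *v w = w \<Longrightarrow> g2 *v w = w \<Longrightarrow> w = 0"
  shows "\<forall>r::real^3. \<exists>a b. lor a v1 = r$1 \<and> lor b v2 = r$2 \<and> lor (a + g1 *v b) v3 = r$3"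
    and "\<forall>a b. lor a v1 = 0 \<and> lor b v2 = 0 \<and> lor (a + g1 *v b) v3 = 0
            \<longrightarrow> (\<exists>x. a = g1 *v x - x \<and> b = g2 *v x - x)"
proof -
  define F :: "(real^3) \<times> (real^3) \<Rightarrow> real^3" where
    "F p = vector [lor (fst p) v1, lor (snd p) v2, lor (fst p + g1 *v snd p) v3]" for p
  have F_add: "F (p + q) = F p + F q" for p q
    by (simp add: F_def vec_eq_iff forall_3 lor_add_left lor_add_right matrix_vector_right_distrib)
  have F_scale: "F (s *\<^sub>R p) = s *\<^sub>R F p" for s p
    by (simp add: F_def vec_eq_iff forall_3 lor_scale_left matrix_vector_mult_scaleR
        flip: scaleR_right_distrib)
  obtain p1 where p1: "lor p1 v1 = 1" using lor_one_exists[OF nz(1)] by blast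
  obtain q2 where q2: "lor q2 v2 = 1" using lor_one_exists[OF nz(2)] by blast
  have FP1: "F (p1, 0) = vector [1, 0, lor p1 v3]" using p1 by (simp add: F_def lor_zero_left lor_sym)
  have FP2: "F (0, q2) = vector [0, 1, lor (g1 *v q2) v3]" using q2 by (simp add: F_def lor_zero_left lor_sym)
  obtain P3 where FP3: "F P3 = vector [0, 0, 1]"
  proof -
    assume th: "\<And>P3. F P3 = vector [0, 0, 1] \<Longrightarrow> thesis"
    show thesis
    proof (cases "\<exists>a. lor a v1 = 0 \<and> lor a v3 \<noteq> 0")
      case True
      then obtain a where a: "lor a v1 = 0" "lor a v3 \<noteq> 0" by blast
      have "F ((1 / lor a v3) *\<^sub>R a, 0) = vector [0, 0, 1]"
        using a by (simp add: F_def lor_scale_left lor_zero_left)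
      thus thesis by (rule th)
    next
      case False
      then obtain k where k: "v3 = k *\<^sub>R v1" using parallel[OF nz(1), of v3] by blast
      have k0: "k \<noteq> 0" using k nz(3) by auto
      show thesis
      proof (cases "\<exists>b. lor b v2 = 0 \<and> lor b v1 \<noteq> 0")
        case True
        then obtain b where b: "lor b v2 = 0" "lor b v1 \<noteq> 0" by blast
        have "lor (g1 *v b) v3 = k * lor b v1"
        proof -
          have "lor (g1 *v b) v3 = k * lor (g1 *v b) (g1 *v v1)" using k fx(1) by (simp add: lor_scale_right)
          also have "\<dots> = k * lor b v1" using g1 by (simp add: O21_def)
          finally show ?thesis .
        qed
        hence "F (0, (1 / (k * lor b v1)) *\<^sub>R b) = vector [0, 0, 1]"
          using b k0 by (simp add: F_def lor_scale_left lor_zero_left matrix_vector_mult_scaleR)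
        thus thesis by (rule th)
      next
        case False
        then obtain m where m: "v1 = m *\<^sub>R v2" using parallel[OF nz(2), of v1] by blast
        have "g2 *v v1 = v1" using m fx(2) by (simp add: matrix_vector_mult_scaleR)
        hence "v1 = 0" using nofix fx(1) by blast
        thus thesis using nz(1) by blast
      qed
    qed
  qed
  define Gm :: "real^3 \<Rightarrow> (real^3) \<times> (real^3)" where
    "Gm c = c$1 *\<^sub>R (p1, 0) + c$2 *\<^sub>R (0, q2)
       + (c$3 - c$1 * lor p1 v3 - c$2 * lor (g1 *v q2) v3) *\<^sub>R P3" for c
  have FG: "F (Gm c) = c" for c
  proof -
    have "F (Gm c) = c$1 *\<^sub>R F (p1, 0) + c$2 *\<^sub>R F (0, q2)
       + (c$3 - c$1 * lor p1 v3 - c$2 * lor (g1 *v q2) v3) *\<^sub>R F P3"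
      by (simp only: Gm_def F_add F_scale)
    thus ?thesis by (simp add: FP1 FP2 FP3 vec_eq_iff forall_3 algebra_simps)
  qed
  have G_add: "Gm (c + d) = Gm c + Gm d" for c d
    by (simp add: Gm_def algebra_simps)
  have G_scale: "Gm (s *\<^sub>R c) = s *\<^sub>R Gm c" for s c
    by (simp add: Gm_def algebra_simps)
  define L :: "real^3 \<Rightarrow> (real^3) \<times> (real^3)" where "L x = (g1 *v x - x, g2 *v x - x)" for x
  have FL: "F (L x) = 0" for x
  proof -
    have "g1 *v x - x + g1 *v (g2 *v x - x) = (g1 ** g2) *v x - x"
      by (simp add: matrix_vector_mult_diff_distrib matrix_vector_mul_assoc)
    note e = this
    show ?thesis using O21_fix_orth[OF g1 fx(1)] O21_fix_orth[OF g2 fx(2)]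
        O21_fix_orth[OF O21_mult[OF g1 g2] fx(3)]
      by (simp add: F_def L_def e; simp add: vec_eq_iff forall_3)
  qed
  have L_add: "L (x + y) = L x + L y" for x y
    by (simp add: L_def matrix_vector_right_distrib)
  have L_scale: "L (s *\<^sub>R x) = s *\<^sub>R L x" for s x
    by (simp add: L_def matrix_vector_mult_scaleR algebra_simps)
  define K :: "(real^3) \<times> (real^3) \<Rightarrow> (real^3) \<times> (real^3)" where "K p = L (fst p) + Gm (snd p)" for p
  have linK: "linear K"
    by (rule linearI) (simp_all add: K_def L_add G_add L_scale G_scale algebra_simps)
  have injK: "inj K"
  proof (rule injI)
    fix p q assume "K p = K q"
    hence eq: "K (p - q) = 0" using linear_diff[OF linK] by simp
    hence "F (K (p - q)) = 0" by (simp add: F_def lor_zero_left vec_eq_iff forall_3)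
    hence c0: "snd (p - q) = 0" by (simp add: K_def F_add FL FG)
    have G0: "Gm 0 = 0" using G_scale[of 0 0] by simp
    hence "L (fst (p - q)) = 0" using eq c0 by (simp add: K_def)
    hence "g1 *v fst (p - q) = fst (p - q)" "g2 *v fst (p - q) = fst (p - q)"
      by (auto simp: L_def prod_eq_iff)
    hence "fst (p - q) = 0" using nofix by blast
    with c0 show "p = q" by (simp add: prod_eq_iff)
  qed
  have surjK: "surj K" using linear_inj_imp_surj[OF linK injK] .
  show "\<forall>r::real^3. \<exists>a b. lor a v1 = r$1 \<and> lor b v2 = r$2 \<and> lor (a + g1 *v b) v3 = r$3"
  proof
    fix r
    define a where "a = fst (Gm r)"
    define b where "b = snd (Gm r)"
    have eq: "vector [lor a v1, lor b v2, lor (a + g1 *v b) v3] = r"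
      using FG[of r] by (simp add: F_def a_def b_def)
    have "r$1 = lor a v1" "r$2 = lor b v2" "r$3 = lor (a + g1 *v b) v3"
      by (simp_all flip: eq)
    thus "\<exists>a b. lor a v1 = r$1 \<and> lor b v2 = r$2 \<and> lor (a + g1 *v b) v3 = r$3" by metis
  qed
  show "\<forall>a b. lor a v1 = 0 \<and> lor b v2 = 0 \<and> lor (a + g1 *v b) v3 = 0
            \<longrightarrow> (\<exists>x. a = g1 *v x - x \<and> b = g2 *v x - x)"
  proof (intro allI impI)
    fix a b assume h: "lor a v1 = 0 \<and> lor b v2 = 0 \<and> lor (a + g1 *v b) v3 = 0"
    obtain p where p: "(a, b) = K p" using surjK by (metis surjD)
    have "F (a, b) = 0" using h by (simp add: F_def vec_eq_iff forall_3)
    hence "snd p = 0" using p by (simp add: K_def F_add FL FG)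
    moreover have "Gm 0 = 0" using G_scale[of 0 0] by simp
    ultimately have "(a, b) = L (fst p)" using p by (simp add: K_def)
    thus "\<exists>x. a = g1 *v x - x \<and> b = g2 *v x - x" by (auto simp: L_def prod_eq_iff)
  qed
qed



lemma scalar_from_eig:
  fixes g :: "real^3^3"
  assumes "eigenvector g (vector [0,0,1])" "eigenvector g (vector [1,0,1])"
    "eigenvector g (vector [1,0,2])" "eigenvector g (vector [0,1,1])" "eigenvector g (vector [0,1,2])"
  shows "\<exists>l. \<forall>x. g *v x = l *\<^sub>R x"
proof -
  obtain l where l: "g *v vector [0,0,1] = l *\<^sub>R vector [0,0,1]" using assms(1) by (auto simp: eigenvector_def)
  obtain m1 where m1: "g *v vector [1,0,1] = m1 *\<^sub>R vector [1,0,1]" using assms(2) by (auto simp: eigenvector_def)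
  obtain n1 where n1: "g *v vector [1,0,2] = n1 *\<^sub>R vector [1,0,2]" using assms(3) by (auto simp: eigenvector_def)
  obtain m2 where m2: "g *v vector [0,1,1] = m2 *\<^sub>R vector [0,1,1]" using assms(4) by (auto simp: eigenvector_def)
  obtain n2 where n2: "g *v vector [0,1,2] = n2 *\<^sub>R vector [0,1,2]" using assms(5) by (auto simp: eigenvector_def)
  have E: "g *v vector [a, b, c] = vector [g$1$1 * a + g$1$2 * b + g$1$3 * c,
        g$2$1 * a + g$2$2 * b + g$2$3 * c, g$3$1 * a + g$3$2 * b + g$3$3 * c]" for a b c
    by (simp add: matrix_vector_mult_def sum_3 vec_eq_iff forall_3)
  have ee: "vector [a,b,c] = (vector [a',b',c'] :: real^3) \<longleftrightarrow> a = a' \<and> b = b' \<and> c = c'" for a b c a' b' c'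
    by (simp add: vec_eq_iff forall_3)
  have sc: "s *\<^sub>R vector [a,b,c] = (vector [s*a, s*b, s*c] :: real^3)" for s a b c
    by (simp add: vec_eq_iff forall_3)
  note eqs = l m1 n1 m2 n2
  have h: "g$1$3 = 0" "g$2$3 = 0" "g$3$3 = l"
     "g$1$1 + g$1$3 = m1" "g$2$1 + g$2$3 = 0" "g$3$1 + g$3$3 = m1"
     "g$1$1 + 2 * g$1$3 = n1" "g$2$1 + 2 * g$2$3 = 0" "g$3$1 + 2 * g$3$3 = 2 * n1"
     "g$1$2 + g$1$3 = 0" "g$2$2 + g$2$3 = m2" "g$3$2 + g$3$3 = m2"
     "g$1$2 + 2 * g$1$3 = 0" "g$2$2 + 2 * g$2$3 = n2" "g$3$2 + 2 * g$3$3 = 2 * n2"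
    using eqs unfolding E sc ee by simp_all
  have ent: "g$1$1 = l" "g$1$2 = 0" "g$1$3 = 0" "g$2$1 = 0" "g$2$2 = l" "g$2$3 = 0"
     "g$3$1 = 0" "g$3$2 = 0" "g$3$3 = l" using h by linarith+
  have "g *v x = l *\<^sub>R x" for x
    by (simp add: matrix_vector_mult_def sum_3 vec_eq_iff forall_3 ent)
  thus ?thesis by blast
qed

lemma scalar_not_hp:
  fixes g :: "real^3^3"
  assumes "\<forall>x. g *v x = l *\<^sub>R x" "hyperbolic g \<or> parabolic g"
  shows False
proof -
  have rl: "real_eigenvalue g k \<Longrightarrow> k = l" for k
  proof -
    assume "real_eigenvalue g k"
    then obtain v where v: "v \<noteq> 0" "g *v v = k *\<^sub>R v" by (auto simp: real_eigenvalue_def)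
    hence "(k - l) *\<^sub>R v = 0" using assms(1) by (simp add: algebra_simps)
    thus "k = l" using v(1) by simp
  qed
  have lm: "(l *\<^sub>R mat 1 :: real^3^3) *v x = l *\<^sub>R x" for x
    by (simp add: vec_eq_iff matrix_vector_mult_def sum_3 forall_3 mat_def)
  have gl: "g = l *\<^sub>R mat 1"
    using assms(1) lm by (simp add: matrix_eq)
  show False using assms(2)
  proof
    assume "hyperbolic g"
    then show False using rl by (auto simp: hyperbolic_def)
  next
    assume p: "parabolic g"
    let ?v = "vector [1, 0, 0] :: complex^3"
    have "?v \<noteq> 0" by (simp add: vec_eq_iff forall_3)
    moreover have "cmat g *v ?v = complex_of_real l *s ?v"
      by (simp add: gl cmat_def matrix_vector_mult_def sum_3 vec_eq_iff forall_3 mat_def)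
    ultimately have "complex_eigenvalue g (complex_of_real l)" by (auto simp: complex_eigenvalue_def)
    hence "l = 1" using p by (simp add: parabolic_def)
    thus False using p gl by (simp add: parabolic_def)
  qed
qed

lemma positive_nonzero:
  fixes g :: "real^3^3"
  assumes "hyperbolic g \<or> parabolic g" "positive_rel g v"
  shows "v \<noteq> 0"
proof
  assume v0: "v = 0"
  have d0: "\<not> pos_oriented 0 x y" for x y by (simp add: pos_oriented_def det_3)
  have ev: "eigenvector g x" if "x \<noteq> 0" "lor x x \<le> 0" for x
    using assms(2) that d0 v0 by (auto simp: positive_rel_def)
  have "eigenvector g (vector [0,0,1])" "eigenvector g (vector [1,0,1])"
    "eigenvector g (vector [1,0,2])" "eigenvector g (vector [0,1,1])" "eigenvector g (vector [0,1,2])"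
    by (rule ev; simp add: vec_eq_iff forall_3 lor_def)+
  then obtain l where "\<forall>x. g *v x = l *\<^sub>R x" using scalar_from_eig by blast
  thus False using scalar_not_hp assms(1) by blast
qed



context fr begin

lemma fix_all: assumes "rho a *v w = w" "rho b *v w = w" "g \<in> carrier G"
  shows "rho g *v w = w"
proof -
  obtain ws where ws: "g = ev ws" using free_word[OF free assms(3)] by blast
  have "rho (ev ws) *v w = w"
  proof (induction ws)
    case Nil thus ?case by (simp add: rho_one)
  next
    case (Cons x ws)
    let ?e = "if fst x then b else a"
    have e: "?e \<in> carrier G" "rho ?e *v w = w" using a_car b_car assms(1,2) by auto
    have lx: "rho (lt' x) *v w = w"
    proof (cases "snd x")
      case True
      have "rho (inv\<^bsub>G\<^esub> ?e) *v w = rho (inv\<^bsub>G\<^esub> ?e) *v (rho ?e *v w)" using e by simp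
      also have "\<dots> = w" using rho_inv(1)[OF e(1)] by (simp add: matrix_vector_mul_assoc)
      finally show ?thesis using True by (simp add: lt_def)
    next
      case False thus ?thesis using e by (simp add: lt_def)
    qed
    have "rho (ev (x # ws)) = rho (lt' x) ** rho (ev ws)"
      by (simp add: eval_cons rho_mult lt_car ev_car)
    thus ?case using Cons lx by (simp flip: matrix_vector_mul_assoc)
  qed
  thus ?thesis using ws by simp
qed

lemma solv: assumes "w \<noteq> 0" "rho a *v w = w" "rho b *v w = w"
  shows "solvable (SO21grp\<lparr>carrier := rho ` carrier G\<rparr>)"
proof -
  let ?H = "SO21grp\<lparr>carrier := rho ` carrier G\<rparr>"
  have fx: "rho g *v w = w" if "g \<in> carrier G" for g using fix_all[OF assms(2,3) that] .
  have H: "carrier ?H = rho ` carrier G" "mult ?H = (**)" "one ?H = mat 1"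
    by (simp_all add: SO21grp_def)
  have cg: "comm_group ?H"
  proof (rule comm_groupI, simp_all only: H)
    fix x y assume "x \<in> rho ` carrier G" "y \<in> rho ` carrier G"
    then obtain g h where gh: "g \<in> carrier G" "h \<in> carrier G" "x = rho g" "y = rho h" by blast
    show "x ** y \<in> rho ` carrier G"
    proof -
      have "g \<otimes>\<^bsub>G\<^esub> h \<in> carrier G" by (rule monoid.m_closed[OF group.is_monoid[OF grp] gh(1,2)])
      moreover have "x ** y = rho (g \<otimes>\<^bsub>G\<^esub> h)" using rho_mult[OF gh(1,2)] gh(3,4) by simp
      ultimately show ?thesis by blast
    qed
    show "x ** y = y ** x"
      using stab_commute[OF assms(1) rho_O[OF gh(1)] SO21_det[OF rho_SO[OF gh(1)]] fx[OF gh(1)]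
          rho_O[OF gh(2)] SO21_det[OF rho_SO[OF gh(2)]] fx[OF gh(2)]] gh by simp
  next
    show "mat 1 \<in> rho ` carrier G" using rho_one one_car by force
  next
    fix x y z :: "real^3^3" show "x ** y ** z = x ** (y ** z)" by (simp add: matrix_mul_assoc)
  next
    fix x :: "real^3^3" show "mat 1 ** x = x" by (rule matrix_mul_lid)
  next
    fix x assume "x \<in> rho ` carrier G"
    then obtain g where g: "g \<in> carrier G" "x = rho g" by blast
    have "rho (inv\<^bsub>G\<^esub> g) ** x = mat 1" using rho_inv(1)[OF g(1)] g by simp
    moreover have "rho (inv\<^bsub>G\<^esub> g) \<in> rho ` carrier G" using group.inv_closed[OF grp g(1)] by blast
    ultimately show "\<exists>y\<in>rho ` carrier G. y ** x = mat 1" by blast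
  qed
  have gH: "group ?H" using cg by (simp add: comm_group_def)
  have "derived ?H (carrier ?H) = {\<one>\<^bsub>?H\<^esub>}"
    by (rule comm_group.derived_eq_singleton[OF cg subset_refl])
  hence "solvable_seq ?H (carrier ?H)"
    using group.trivial_derived_seq_imp_solvable[OF gH group.subgroup_self[OF gH], of 1] by simp
  thus ?thesis by (simp add: solvable_def)
qed

end



theorem lemma6p1:
  fixes G :: "('g, 'b) monoid_scheme" and A1 A2 A3 :: 'g
    and rho0 :: "'g \<Rightarrow> real^3^3" and v1 v2 v3 :: "real^3"
    and mu :: "('g \<Rightarrow> real^3) \<Rightarrow> real^3"
  assumes free: "free_on2 G A1 A2"
    and A3: "A3 \<in> carrier G" "A1 \<otimes>\<^bsub>G\<^esub> A2 \<otimes>\<^bsub>G\<^esub> A3 = \<one>\<^bsub>G\<^esub>"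
    and hom: "rho0 \<in> hom G SO21grp"
    and types: "\<forall>A\<in>{A1, A2, A3}. hyperbolic (rho0 A) \<or> parabolic (rho0 A)"
    and nonsolv: "\<not> solvable (SO21grp\<lparr>carrier := rho0 ` carrier G\<rparr>)"
    and pos: "positive_rel (rho0 A1) v1" "positive_rel (rho0 A2) v2" "positive_rel (rho0 A3) v3"
    and mu_def: "\<And>u. mu u = vector [lor (u A1) v1, lor (u A2) v2, lor (u A3) v3]"
  shows "(\<forall>u\<in>cocycles G rho0. \<forall>u'\<in>cocycles G rho0.
            (\<lambda>g. u g - u' g) \<in> coboundaries G rho0 \<longrightarrow> mu u = mu u')
       \<and> (\<forall>u\<in>cocycles G rho0. \<forall>u'\<in>cocycles G rho0. \<forall>c::real.
            mu (\<lambda>g. u g + u' g) = mu u + mu u' \<and> mu (\<lambda>g. c *\<^sub>R u g) = c *\<^sub>R mu u)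
       \<and> mu ` cocycles G rho0 = UNIV
       \<and> (\<forall>u\<in>cocycles G rho0. mu u = 0 \<longrightarrow> u \<in> coboundaries G rho0)"
proof -
  interpret fr G A1 A2 rho0 using free hom by unfold_locales
  let ?g1 = "rho0 A1" and ?g2 = "rho0 A2" and ?g3 = "rho0 A3"
  have A12: "A1 \<otimes>\<^bsub>G\<^esub> A2 \<in> carrier G" by (rule monoid.m_closed[OF group.is_monoid[OF grp] a_car b_car])
  have g1: "?g1 \<in> O21" and g2: "?g2 \<in> O21" and g3: "?g3 \<in> O21" and g12: "rho0 (A1 \<otimes>\<^bsub>G\<^esub> A2) \<in> O21"
    using rho_O a_car b_car A3(1) A12 by auto
  have nz: "v1 \<noteq> 0" "v2 \<noteq> 0" "v3 \<noteq> 0"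
    using positive_nonzero types pos by auto
  have fx: "?g1 *v v1 = v1" "?g2 *v v2 = v2" "?g3 *v v3 = v3"
    using pos by (auto simp: positive_rel_def Fix_def)
  have r12: "rho0 (A1 \<otimes>\<^bsub>G\<^esub> A2) = ?g1 ** ?g2" by (rule rho_mult[OF a_car b_car])
  have r123: "rho0 (A1 \<otimes>\<^bsub>G\<^esub> A2) ** ?g3 = mat 1"
    using rho_mult[OF A12 A3(1)] A3(2) rho_one by simp
  have fx12: "rho0 (A1 \<otimes>\<^bsub>G\<^esub> A2) *v v3 = v3"
  proof -
    have "rho0 (A1 \<otimes>\<^bsub>G\<^esub> A2) *v v3 = rho0 (A1 \<otimes>\<^bsub>G\<^esub> A2) *v (?g3 *v v3)" using fx(3) by simp
    also have "\<dots> = v3" using r123 by (simp add: matrix_vector_mul_assoc)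
    finally show ?thesis .
  qed
  have nofix: "w = 0" if "?g1 *v w = w" "?g2 *v w = w" for w
    using solv[of w] that nonsolv by blast
  note LM = lin_main[OF g1 g2 nz fx(1,2) fx12[unfolded r12] nofix]
  have key: "lor (u A3) v3 = - lor (u A1 + ?g1 *v u A2) v3" if u: "u \<in> cocycles G rho0" for u
  proof -
    have "0 = u (A1 \<otimes>\<^bsub>G\<^esub> A2 \<otimes>\<^bsub>G\<^esub> A3)" using A3(2) cocycle_one[OF u] by simp
    also have "\<dots> = u (A1 \<otimes>\<^bsub>G\<^esub> A2) + rho0 (A1 \<otimes>\<^bsub>G\<^esub> A2) *v u A3"
      using u A12 A3(1) by (simp add: cocycles_def)
    also have "\<dots> = u A1 + ?g1 *v u A2 + rho0 (A1 \<otimes>\<^bsub>G\<^esub> A2) *v u A3"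
      using u a_car b_car by (simp add: cocycles_def)
    finally have e: "rho0 (A1 \<otimes>\<^bsub>G\<^esub> A2) *v u A3 = - (u A1 + ?g1 *v u A2)"
      by (simp add: algebra_simps eq_neg_iff_add_eq_0)
    have "lor (u A3) v3 = lor (rho0 (A1 \<otimes>\<^bsub>G\<^esub> A2) *v u A3) (rho0 (A1 \<otimes>\<^bsub>G\<^esub> A2) *v v3)"
      using g12 by (simp add: O21_def)
    also have "\<dots> = lor (- (u A1 + ?g1 *v u A2)) v3" by (simp only: e fx12)
    also have "\<dots> = - lor (u A1 + ?g1 *v u A2) v3" by (rule lor_minus_left)
    finally show ?thesis .
  qed
  have P1: "\<forall>u\<in>cocycles G rho0. \<forall>u'\<in>cocycles G rho0.
            (\<lambda>g. u g - u' g) \<in> coboundaries G rho0 \<longrightarrow> mu u = mu u'"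
  proof (intro ballI impI)
    fix u u' assume "u \<in> cocycles G rho0" "u' \<in> cocycles G rho0"
      "(\<lambda>g. u g - u' g) \<in> coboundaries G rho0"
    then obtain x where x: "\<And>g. g \<in> carrier G \<Longrightarrow> u g - u' g = rho0 g *v x - x"
      by (auto simp: coboundaries_def)
    have "lor (u A) v = lor (u' A) v" if "A \<in> carrier G" "rho0 A *v v = v" for A v
    proof -
      have "lor (u A - u' A) v = 0" using x[OF that(1)] O21_fix_orth[OF rho_O[OF that(1)] that(2)] by simp
      thus ?thesis by (simp add: lor_diff_left)
    qed
    thus "mu u = mu u'" using a_car b_car A3(1) fx by (simp add: mu_def)
  qed
  have P2: "\<forall>u\<in>cocycles G rho0. \<forall>u'\<in>cocycles G rho0. \<forall>c::real.
            mu (\<lambda>g. u g + u' g) = mu u + mu u' \<and> mu (\<lambda>g. c *\<^sub>R u g) = c *\<^sub>R mu u"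
    by (simp add: mu_def vec_eq_iff forall_3 lor_add_left lor_scale_left)
  have P3: "mu ` cocycles G rho0 = UNIV"
  proof -
    have "r \<in> mu ` cocycles G rho0" for r :: "real^3"
    proof -
    obtain a b where ab: "lor a v1 = r$1" "lor b v2 = r$2" "lor (a + ?g1 *v b) v3 = - r$3"
      using LM(1) by (metis vector_3)
    let ?u = "cob a b"
    have u: "?u \<in> cocycles G rho0" by (rule cob_cocycle)
    have "mu ?u = r" using key[OF u] ab
      by (simp add: mu_def cob_a cob_b vec_eq_iff forall_3)
    thus "r \<in> mu ` cocycles G rho0" using u by blast
    qed
    thus ?thesis by auto
  qed
  have P4: "\<forall>u\<in>cocycles G rho0. mu u = 0 \<longrightarrow> u \<in> coboundaries G rho0"
  proof (intro ballI impI)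
    fix u assume u: "u \<in> cocycles G rho0" and m: "mu u = 0"
    have c: "lor (u A1) v1 = 0" "lor (u A2) v2 = 0" "lor (u A3) v3 = 0"
      using m by (simp_all add: mu_def vec_eq_iff forall_3)
    hence "lor (u A1 + ?g1 *v u A2) v3 = 0" using key[OF u] by simp
    then obtain x where x: "u A1 = ?g1 *v x - x" "u A2 = ?g2 *v x - x" using LM(2) c by blast
    define u' where "u' g = u g - (rho0 g *v x - x)" for g
    have u': "u' \<in> cocycles G rho0"
      using u by (auto simp: cocycles_def u'_def rho_mult matrix_vector_right_distrib
          matrix_vector_mult_diff_distrib matrix_vector_mul_assoc algebra_simps)
    have "u' g = 0" if "g \<in> carrier G" for g
      using cocycle_zero[OF u' _ _ that] x by (simp add: u'_def)
    hence "\<forall>g\<in>carrier G. u g = rho0 g *v x - x" by (simp add: u'_def)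
    thus "u \<in> coboundaries G rho0" by (auto simp: coboundaries_def)
  qed
  show ?thesis using P1 P2 P3 P4 by blast
qed



end
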